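(* Let $K=(C,\langle Q_i,1\le i\le k\rangle)$ and $K'=(C',\langle Q'_j,1\le j\le l\rangle)$ be two non-degenerate CMIs in pure form, with $\mathrm{can}(K)=(C,\langle\mathbb I_K,\mathbb I_K,P_i,1\le i\le t\rangle)$ and $\mathrm{can}(K')=(C',\langle\mathbb I_{K'},\mathbb I_{K'},P'_j,1\le j\le s\rangle)$. If $K\sim K'$, then $\langle P_i,1\le i\le t\rangle=\langle P'_j,1\le j\le s\rangle$.
   Context: Setting: $X_1,\dots,X_n$ jointly distributed discrete random variables with $H(X_i)<\infty$; distribution unspecified. $X_\alpha=(X_i,i\in\alpha)$, $X_\emptyset$ constant. A CMI is $K=(C,\langle Q_1,\dots,Q_k\rangle)$, $k\ge0$, $C\subseteq\{1,\dots,n\}$, $\langle\cdot\rangle$ an unordered multiset of subsets; valid (for a given distribution) if $\sum_iH(X_{Q_i}|X_C)-H(X_{Q_1},\dots,X_{Q_k}|X_C)=0$. Empty members may be deleted; equality of collections is multiset equality. $K\sim K'$: for every joint distribution both valid or both invalid. Degenerate = valid for every distribution, written $(\cdot,\langle\ \rangle)$. Pure form: all $Q_i\ne\emptyset$, $Q_i\cap C=\emptyset$. For pure $K$: $\mathbb I_K$ = set of indices lying in at least two members of the collection if $k\ge2$, else $\emptyset$; $P_1,\dots,P_t$ the nonempty sets among $Q_i\setminus\mathbb I_K$; $\mathrm{can}(K)=(\cdot,\langle\ \rangle)$ if $k\le1$, $(C,\langle\mathbb I_K,\mathbb I_K\rangle)$ if $k\ge2,\mathbb I_K\ne\emptyset,t\le1$,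 $(C,\langle P_1..P_t\rangle)$ if $k\ge2,\mathbb I_K=\emptyset$, $(C,\langle\mathbb I_K,\mathbb I_K,P_1..P_t\rangle)$ if $k\ge2,\mathbb I_K\ne\emptyset,t\ge2$. The general-form notation $(C,\langle\mathbb I_K,\mathbb I_K,P_i,1\le i\le t\rangle)$ means: the two copies of $\mathbb I_K$ are omitted when $\mathbb I_K=\emptyset$, and in this notation $t=0$ when $\mathrm{can}(K)=(C,\langle\mathbb I_K,\mathbb I_K\rangle)$ (so $t\ne1$). *)

theory Defs
  imports "HOL-Probability.Probability_Mass_Function" "HOL-Analysis.Infinite_Sum" "HOL-Library.Multiset"
begin

text \<open>A joint distribution of the discrete random variables X_1,...,X_n is a pmf on
  outcomes \<omega> :: nat \<Rightarrow> nat, where X_i(\<omega>) = \<omega> i (values relabelled into nat).\<close>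

definition proj :: "nat set \<Rightarrow> (nat \<Rightarrow> nat) \<Rightarrow> (nat \<Rightarrow> nat)" where
  "proj A \<omega> = (\<lambda>i. if i \<in> A then \<omega> i else 0)"

definition marg :: "(nat \<Rightarrow> nat) pmf \<Rightarrow> nat set \<Rightarrow> (nat \<Rightarrow> nat) pmf" where
  "marg p A = map_pmf (proj A) p"

definition ent_terms :: "'a pmf \<Rightarrow> 'a \<Rightarrow> real" where
  "ent_terms q x = - pmf q x * log 2 (pmf q x)"

definition entropy_pmf :: "'a pmf \<Rightarrow> real" where
  "entropy_pmf q = infsum (ent_terms q) UNIV"

definition finite_entropy :: "'a pmf \<Rightarrow> bool" where
  "finite_entropy q \<longleftrightarrow> ent_terms q summable_on UNIV"

definition H :: "(nat \<Rightarrow> nat) pmf \<Rightarrow> nat set \<Rightarrow> real" where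
  "H p A = entropy_pmf (marg p A)"

definition condH :: "(nat \<Rightarrow> nat) pmf \<Rightarrow> nat set \<Rightarrow> nat set \<Rightarrow> real" where
  "condH p Q C = H p (Q \<union> C) - H p C"

definition admissible :: "nat \<Rightarrow> (nat \<Rightarrow> nat) pmf \<Rightarrow> bool" where
  "admissible n p \<longleftrightarrow> (\<forall>i\<in>{1..n}. finite_entropy (marg p {i}))"

type_synonym cmi = "nat set \<times> nat set multiset"

definition valid :: "(nat \<Rightarrow> nat) pmf \<Rightarrow> cmi \<Rightarrow> bool" where
  "valid p K = (case K of (C, Qs) \<Rightarrow>
     (\<Sum>Q\<in>#Qs. condH p Q C) - condH p (\<Union> (set_mset Qs)) C = 0)"

definition is_cmi :: "nat \<Rightarrow> cmi \<Rightarrow> bool" where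
  "is_cmi n K \<longleftrightarrow> fst K \<subseteq> {1..n} \<and> (\<forall>Q\<in>#snd K. Q \<subseteq> {1..n})"

definition cmi_equiv :: "nat \<Rightarrow> cmi \<Rightarrow> cmi \<Rightarrow> bool" where
  "cmi_equiv n K K' \<longleftrightarrow> (\<forall>p. admissible n p \<longrightarrow> (valid p K \<longleftrightarrow> valid p K'))"

definition degenerate :: "nat \<Rightarrow> cmi \<Rightarrow> bool" where
  "degenerate n K \<longleftrightarrow> (\<forall>p. admissible n p \<longrightarrow> valid p K)"

definition pure :: "cmi \<Rightarrow> bool" where
  "pure K \<longleftrightarrow> (\<forall>Q\<in>#snd K. Q \<noteq> {} \<and> Q \<inter> fst K = {})"

definition IK :: "cmi \<Rightarrow> nat set" where
  "IK K = (if size (snd K) \<ge> 2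
           then {i. size (filter_mset (\<lambda>Q. i \<in> Q) (snd K)) \<ge> 2} else {})"

definition Praw :: "cmi \<Rightarrow> nat set multiset" where
  "Praw K = filter_mset (\<lambda>P. P \<noteq> {}) (image_mset (\<lambda>Q. Q - IK K) (snd K))"

definition can :: "cmi \<Rightarrow> cmi" where
  "can K = (let (C, Qs) = K; I = IK K; P = Praw K in
     if size Qs \<le> 1 then ({}, {#})
     else if I \<noteq> {} \<and> size P \<le> 1 then (C, {#I, I#})
     else if I = {} then (C, P)
     else (C, {#I, I#} + P))"

text \<open>The P-part of can(K) in the general notation (C,<I_K,I_K,P_i,1<=i<=t>):
  the collection of can(K) with the two copies of I_K removed (when I_K is nonempty).\<close>
definition canP :: "cmi \<Rightarrow> nat set multiset" where
  "canP K = snd (can K) - (if IK K = {} then {#} else {#IK K, IK K#})"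

end

theory Submission
  imports Defs
begin


lemma ent_terms_pmf_of_set:
  assumes "finite B" "B \<noteq> {}"
  shows "ent_terms (pmf_of_set B) x = (if x \<in> B then log 2 (card B) / card B else 0)"
  using assms by (auto simp: ent_terms_def log_divide card_gt_0_iff)

lemma entropy_pmf_of_set:
  assumes "finite B" "B \<noteq> {}"
  shows "entropy_pmf (pmf_of_set B) = log 2 (card B)"
proof -
  have "entropy_pmf (pmf_of_set B) = infsum (ent_terms (pmf_of_set B)) B"
    unfolding entropy_pmf_def
    by (rule infsum_cong_neutral) (auto simp: ent_terms_pmf_of_set assms)
  also have "\<dots> = (\<Sum>x\<in>B. log 2 (card B) / card B)"
    using assms by (simp add: ent_terms_pmf_of_set)
  also have "\<dots> = log 2 (card B)" using assms by simp
  finally show ?thesis .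
qed

lemma finite_entropy_pmf_of_set:
  assumes "finite B" "B \<noteq> {}"
  shows "finite_entropy (pmf_of_set B)"
proof -
  have "ent_terms (pmf_of_set B) summable_on UNIV \<longleftrightarrow> ent_terms (pmf_of_set B) summable_on B"
    by (rule summable_on_cong_neutral) (auto simp: ent_terms_pmf_of_set assms)
  then show ?thesis using assms by (simp add: finite_entropy_def)
qed

lemma map_pmf_of_set_2:
  "map_pmf f (pmf_of_set {a, b}) = pmf_of_set {f a, f b}"
proof (cases "f a = f b")
  case True
  have "map_pmf f (pmf_of_set {a, b}) = map_pmf (\<lambda>_. f a) (pmf_of_set {a, b})"
    by (rule map_pmf_cong) (auto simp: True)
  then show ?thesis using True by (simp add: pmf_of_set_singleton)
next
  case False
  then have "inj_on f {a,b}" by (auto simp: inj_on_def)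
  then show ?thesis by (simp add: map_pmf_of_set_inj)
qed

definition om1 :: "nat set \<Rightarrow> nat \<Rightarrow> nat" where "om1 S = (\<lambda>i. if i \<in> S then 1 else 0)"
definition pS :: "nat set \<Rightarrow> (nat \<Rightarrow> nat) pmf" where "pS S = pmf_of_set {(\<lambda>i. 0), om1 S}"

lemma marg_pS: "marg (pS S) A = pmf_of_set {proj A (\<lambda>i. 0), proj A (om1 S)}"
  by (simp add: marg_def pS_def map_pmf_of_set_2)

lemma proj_eq_iff: "proj A (\<lambda>i. 0) = proj A (om1 S) \<longleftrightarrow> A \<inter> S = {}"
  by (auto simp: proj_def om1_def fun_eq_iff)

lemma H_pS: "H (pS S) A = (if A \<inter> S = {} then 0 else 1)"
proof (cases "A \<inter> S = {}")
  case True
  then have "proj A (\<lambda>i. 0) = proj A (om1 S)" by (simp add: proj_eq_iff)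
  then show ?thesis using True by (simp add: H_def marg_pS entropy_pmf_of_set)
next
  case False
  then have "proj A (\<lambda>i. 0) \<noteq> proj A (om1 S)" by (simp add: proj_eq_iff)
  then show ?thesis using False by (simp add: H_def marg_pS entropy_pmf_of_set)
qed

lemma admissible_pS: "admissible n (pS S)"
  by (simp add: admissible_def marg_pS finite_entropy_pmf_of_set)

definition bad :: "cmi \<Rightarrow> nat set \<Rightarrow> bool" where
  "bad K S \<longleftrightarrow> S \<inter> fst K = {} \<and> 2 \<le> size (filter_mset (\<lambda>Q. Q \<inter> S \<noteq> {}) (snd K))"

lemma sum_mset_indicator: "(\<Sum>Q\<in>#Qs. (if P Q then 1 else 0 :: real)) = real (size (filter_mset P Qs))"
  by (induction Qs) auto

lemma nat_aux: "(real m - (if m = 0 then 0 else 1) = 0) \<longleftrightarrow> \<not> 2 \<le> (m::nat)"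
  by (cases m) auto

lemma valid_pS: "valid (pS S) K \<longleftrightarrow> \<not> bad K S"
proof (cases K)
  case (Pair C Qs)
  show ?thesis
  proof (cases "C \<inter> S = {}")
    case False
    then have "\<not> bad K S" by (auto simp: Pair bad_def)
    then show ?thesis using False by (simp add: Pair valid_def condH_def H_pS Int_Un_distrib2)
  next
    case True
    let ?m = "size (filter_mset (\<lambda>Q. Q \<inter> S \<noteq> {}) Qs)"
    have "(\<Sum>Q\<in>#Qs. condH (pS S) Q C) = (\<Sum>Q\<in>#Qs. (if Q \<inter> S \<noteq> {} then 1 else 0 :: real))"
      using True by (intro arg_cong[where f=sum_mset] image_mset_cong) (simp add: condH_def H_pS Int_Un_distrib2)
    also have "\<dots> = real ?m" by (rule sum_mset_indicator)
    finally have 1: "(\<Sum>Q\<in>#Qs. condH (pS S) Q C) = real ?m" .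
    have "(\<Union> (set_mset Qs)) \<inter> S \<noteq> {} \<longleftrightarrow> ?m \<noteq> 0"
      by (auto simp: filter_mset_eq_conv)
    then have 2: "condH (pS S) (\<Union> (set_mset Qs)) C = (if ?m = 0 then 0 else 1)"
      using True unfolding condH_def H_pS Int_Un_distrib2 by auto
    have "S \<inter> C = {}" using True by blast
    have "valid (pS S) K \<longleftrightarrow> real ?m - (if ?m = 0 then 0 else 1) = 0"
      using 1 2 by (simp add: Pair valid_def del: filter_mset_eq_conv)
    also have "\<dots> \<longleftrightarrow> \<not> 2 \<le> ?m"
      using nat_aux[of ?m] by blast
    finally show ?thesis using \<open>S \<inter> C = {}\<close> by (simp add: Pair bad_def)
  qed
qed



definition Dset :: "nat \<Rightarrow> (nat set \<Rightarrow> bool) \<Rightarrow> nat set" where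
  "Dset n b = {x\<in>{1..n}. \<not> b {x} \<and> (\<exists>y\<in>{1..n}. \<not> b {y} \<and> b {x, y})}"
definition cls :: "nat \<Rightarrow> (nat set \<Rightarrow> bool) \<Rightarrow> nat \<Rightarrow> nat set" where
  "cls n b x = {y \<in> Dset n b. \<not> b {x, y}}"
definition Fc :: "nat \<Rightarrow> (nat set \<Rightarrow> bool) \<Rightarrow> nat set multiset" where
  "Fc n b = mset_set (cls n b ` Dset n b)"

lemma two_le_size: "a \<in># M \<Longrightarrow> b \<in># M \<Longrightarrow> a \<noteq> b \<Longrightarrow> 2 \<le> size M"
proof -
  assume a: "a \<in># M" and b: "b \<in># M" and ne: "a \<noteq> b"
  obtain M' where M: "M = add_mset a M'" using a by (metis multi_member_split)
  have "b \<in># M'" using b ne M by auto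
  then have "size M' \<ge> 1" by (cases M') auto
  then show ?thesis using M by simp
qed

lemma count_image_mset_size: "count (image_mset f M) y = size (filter_mset (\<lambda>x. f x = y) M)"
  by (induction M) auto

definition cnt :: "nat set multiset \<Rightarrow> nat \<Rightarrow> nat" where
  "cnt Qs x = size (filter_mset (\<lambda>Q. x \<in> Q) Qs)"

lemma uniq:
  assumes "Q \<in># Qs" "Q' \<in># Qs" "x \<in> Q" "x \<in> Q'" "cnt Qs x < 2"
  shows "Q = Q'"
proof (rule ccontr)
  assume "Q \<noteq> Q'"
  then have "2 \<le> cnt Qs x" unfolding cnt_def using assms by (intro two_le_size) auto
  then show False using assms by simp
qed

context
  fixes C :: "nat set" and Qs :: "nat set multiset" and n :: nat
  assumes pure: "pure (C, Qs)" and sz: "2 \<le> size Qs" and cm: "is_cmi n (C, Qs)"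
begin

abbreviation "I \<equiv> {x. 2 \<le> cnt Qs x}"

lemma IK_eq: "IK (C, Qs) = I"
  using sz by (simp add: IK_def cnt_def)

lemma Q_disj: "Q \<in># Qs \<Longrightarrow> Q \<inter> C = {}"
  using pure by (auto simp: pure_def)

lemma Q_sub: "Q \<in># Qs \<Longrightarrow> Q \<subseteq> {1..n}"
  using cm by (auto simp: is_cmi_def)

lemma in_someQ: "2 \<le> cnt Qs x \<Longrightarrow> \<exists>Q\<in>#Qs. x \<in> Q"
proof (rule ccontr)
  assume a: "2 \<le> cnt Qs x" "\<not> (\<exists>Q\<in>#Qs. x \<in> Q)"
  then have eq: "filter_mset (\<lambda>Q. x \<in> Q) Qs = filter_mset (\<lambda>_. False) Qs"
    by (intro filter_mset_cong) auto
  have "2 \<le> size (filter_mset (\<lambda>_. False) Qs)" using a(1) unfolding cnt_def eq .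
  then show False by simp
qed

lemma bad_single: "bad (C, Qs) {x} \<longleftrightarrow> x \<in> I"
proof -
  have "filter_mset (\<lambda>Q. Q \<inter> {x} \<noteq> {}) Qs = filter_mset (\<lambda>Q. x \<in> Q) Qs"
    by (rule filter_mset_cong) auto
  moreover have "x \<in> I \<Longrightarrow> x \<notin> C" using in_someQ Q_disj by blast
  ultimately show ?thesis by (auto simp: bad_def cnt_def)
qed

lemma bad_pair:
  assumes x: "x \<notin> I" and y: "y \<notin> I"
  shows "bad (C, Qs) {x, y} \<longleftrightarrow> (\<exists>Q\<in>#Qs. \<exists>Q'\<in>#Qs. x \<in> Q \<and> y \<in> Q' \<and> y \<notin> Q)"
proof
  assume "\<exists>Q\<in>#Qs. \<exists>Q'\<in>#Qs. x \<in> Q \<and> y \<in> Q' \<and> y \<notin> Q"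
  then obtain Q Q' where QQ: "Q \<in># Qs" "Q' \<in># Qs" "x \<in> Q" "y \<in> Q'" "y \<notin> Q" by blast
  have "x \<notin> C" "y \<notin> C" using QQ Q_disj by blast+
  moreover have "2 \<le> size (filter_mset (\<lambda>Q. Q \<inter> {x,y} \<noteq> {}) Qs)"
    using QQ by (intro two_le_size[of Q _ Q']) auto
  ultimately show "bad (C, Qs) {x, y}" by (auto simp: bad_def)
next
  assume b: "bad (C, Qs) {x, y}"
  have fe: "filter_mset (\<lambda>Q. Q \<inter> {x,y} \<noteq> {}) Qs = filter_mset (\<lambda>Q. x \<in> Q \<or> y \<in> Q) Qs"
    by (rule filter_mset_cong) auto
  have b2: "2 \<le> size (filter_mset (\<lambda>Q. x \<in> Q \<or> y \<in> Q) Qs)" using b fe by (simp add: bad_def)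
  show "\<exists>Q\<in>#Qs. \<exists>Q'\<in>#Qs. x \<in> Q \<and> y \<in> Q' \<and> y \<notin> Q"
  proof (rule ccontr)
    assume nx: "\<not> ?thesis"
    show False
    proof (cases "\<exists>Q\<in>#Qs. x \<in> Q")
      case False
      then have "filter_mset (\<lambda>Q. x \<in> Q \<or> y \<in> Q) Qs = filter_mset (\<lambda>Q. y \<in> Q) Qs"
        by (intro filter_mset_cong) auto
      then show False using b2 y by (simp add: cnt_def)
    next
      case True
      then obtain Q0 where Q0: "Q0 \<in># Qs" "x \<in> Q0" by blast
      have "filter_mset (\<lambda>Q. x \<in> Q \<or> y \<in> Q) Qs = filter_mset (\<lambda>Q. x \<in> Q) Qs"
      proof (rule filter_mset_cong[OF refl])
        fix Q assume Q: "Q \<in># Qs"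
        show "(x \<in> Q \<or> y \<in> Q) = (x \<in> Q)"
        proof
          assume "x \<in> Q \<or> y \<in> Q"
          then show "x \<in> Q"
          proof
            assume yQ: "y \<in> Q"
            then have "y \<in> Q0" using nx Q Q0 by blast
            then have "Q = Q0" using uniq[OF Q Q0(1) yQ] y by simp
            then show "x \<in> Q" using Q0 by simp
          qed
        qed simp
      qed
      then show False using b2 x by (simp add: cnt_def)
    qed
  qed
qed

lemma notI_cnt: "x \<notin> I \<Longrightarrow> cnt Qs x < 2" by simp

lemma D_char: "z \<in> Dset n (bad (C, Qs)) \<longleftrightarrow>
   z \<notin> I \<and> (\<exists>Q\<in>#Qs. z \<in> Q \<and> (\<exists>Q'\<in>#Qs. \<exists>y\<in>Q'. y \<notin> I \<and> y \<notin> Q))"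
proof
  assume "z \<in> Dset n (bad (C, Qs))"
  then obtain y where 1: "\<not> bad (C, Qs) {z}" "\<not> bad (C, Qs) {y}" "bad (C, Qs) {z, y}"
    unfolding Dset_def by blast
  have zI: "z \<notin> I" by (metis 1(1) bad_single)
  have yI: "y \<notin> I" by (metis 1(2) bad_single)
  obtain Q Q' where "Q \<in># Qs" "Q' \<in># Qs" "z \<in> Q" "y \<in> Q'" "y \<notin> Q"
    using 1(3) unfolding bad_pair[OF zI yI] by blast
  then show "z \<notin> I \<and> (\<exists>Q\<in>#Qs. z \<in> Q \<and> (\<exists>Q'\<in>#Qs. \<exists>y\<in>Q'. y \<notin> I \<and> y \<notin> Q))"
    using zI yI by blast
next
  assume "z \<notin> I \<and> (\<exists>Q\<in>#Qs. z \<in> Q \<and> (\<exists>Q'\<in>#Qs. \<exists>y\<in>Q'. y \<notin> I \<and> y \<notin> Q))"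
  then obtain Q Q' y where h: "z \<notin> I" "Q \<in># Qs" "z \<in> Q" "Q' \<in># Qs" "y \<in> Q'" "y \<notin> I" "y \<notin> Q"
    by blast
  have "bad (C, Qs) {z, y}" unfolding bad_pair[OF h(1) h(6)] using h by blast
  moreover have "z \<in> {1..n}" "y \<in> {1..n}" using h Q_sub by blast+
  moreover have "\<not> bad (C, Qs) {z}" "\<not> bad (C, Qs) {y}" by (metis h(1) bad_single) (metis h(6) bad_single)
  ultimately show "z \<in> Dset n (bad (C, Qs))" unfolding Dset_def by blast
qed

lemma cls_eq:
  assumes Q: "Q \<in># Qs" "x \<in> Q" and xD: "x \<in> Dset n (bad (C, Qs))"
  shows "cls n (bad (C, Qs)) x = Q - I"
proof -
  obtain Q1 Q' y where h: "x \<notin> I" "Q1 \<in># Qs" "x \<in> Q1" "Q' \<in># Qs" "y \<in> Q'" "y \<notin> I" "y \<notin> Q1"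
    using xD unfolding D_char by blast
  have xc: "cnt Qs x < 2" using h(1) by simp
  have "Q1 = Q" using uniq[OF h(2) Q(1) h(3) Q(2) xc] .
  show ?thesis
  proof
    show "cls n (bad (C, Qs)) x \<subseteq> Q - I"
    proof
      fix z assume "z \<in> cls n (bad (C, Qs)) x"
      then have zD: "z \<in> Dset n (bad (C, Qs))" and nb: "\<not> bad (C, Qs) {x, z}"
        by (auto simp: cls_def)
      from zD obtain Q2 where z: "z \<notin> I" "Q2 \<in># Qs" "z \<in> Q2" unfolding D_char by blast
      have "z \<in> Q"
      proof (rule ccontr)
        assume "z \<notin> Q"
        then have "bad (C, Qs) {x, z}" unfolding bad_pair[OF h(1) z(1)] using Q z by blast
        then show False using nb by simp
      qed
      then show "z \<in> Q - I" using z by simp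
    qed
  next
    show "Q - I \<subseteq> cls n (bad (C, Qs)) x"
    proof
      fix z assume z: "z \<in> Q - I"
      then have zI: "z \<notin> I" by simp
      have "z \<in> Dset n (bad (C, Qs))" unfolding D_char
        using z Q h \<open>Q1 = Q\<close> by blast
      moreover have "\<not> bad (C, Qs) {x, z}"
      proof
        assume "bad (C, Qs) {x, z}"
        then obtain Q3 where Q3: "Q3 \<in># Qs" "x \<in> Q3" "z \<notin> Q3" unfolding bad_pair[OF h(1) zI] by blast
        have "Q3 = Q" using uniq[OF Q3(1) Q(1) Q3(2) Q(2) xc] .
        then show False using Q3 z by simp
      qed
      ultimately show "z \<in> cls n (bad (C, Qs)) x" by (simp add: cls_def)
    qed
  qed
qed

abbreviation "P \<equiv> Praw (C, Qs)"

lemma P_mem: "X \<in># P \<longleftrightarrow> X \<noteq> {} \<and> (\<exists>Q\<in>#Qs. X = Q - I)"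
  by (auto simp: Praw_def IK_eq)

lemma P_count: "count P X \<le> 1"
proof (cases "X \<in># P")
  case False then show ?thesis by (simp add: not_in_iff)
next
  case True
  then obtain Q0 where X: "X \<noteq> {}" "Q0 \<in># Qs" "X = Q0 - I" using P_mem by blast
  then obtain x where x: "x \<in> X" by blast
  have xI: "x \<notin> I" using x X by blast
  have "count P X = size (filter_mset (\<lambda>Q. Q - I = X) Qs)"
    using X by (simp add: Praw_def IK_eq count_image_mset_size)
  also have "\<dots> \<le> size (filter_mset (\<lambda>Q. x \<in> Q) Qs)"
    by (intro size_mset_mono filter_mset_mono_strong) (use x in auto)
  also have "\<dots> \<le> 1" using xI by (simp add: cnt_def)
  finally show ?thesis .
qed

lemma canP_eq: "canP (C, Qs) = (if size P \<le> 1 then {#} else P)"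
proof (cases "I = {}")
  case True
  have "image_mset (\<lambda>Q. Q - IK (C, Qs)) Qs = Qs" using True by (simp add: IK_eq)
  moreover have "filter_mset (\<lambda>P. P \<noteq> {}) Qs = filter_mset (\<lambda>_. True) Qs"
    using pure by (intro filter_mset_cong) (auto simp: pure_def)
  ultimately have "P = Qs" by (simp add: Praw_def)
  then show ?thesis using True sz by (simp add: canP_def can_def IK_eq Let_def)
next
  case False
  then show ?thesis using sz by (auto simp: canP_def can_def IK_eq Let_def)
qed

lemma P_ident: "mset_set (set_mset P) = P"
proof (rule multiset_eqI)
  fix X
  show "count (mset_set (set_mset P)) X = count P X"
  proof (cases "X \<in># P")
    case True
    then have "0 < count P X" by simp
    then have "count P X = 1" using P_count[of X] by linarith
    then show ?thesis using True by (simp add: count_mset_set)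
  qed (simp add: count_mset_set not_in_iff)
qed

lemma two_P: "2 \<le> size P \<Longrightarrow> X \<in># P \<Longrightarrow> \<exists>X'\<in>#P. X' \<noteq> X"
proof -
  assume "2 \<le> size P" "X \<in># P"
  obtain P' where P': "P = add_mset X P'" using \<open>X \<in># P\<close> by (metis multi_member_split)
  then have "P' \<noteq> {#}" using \<open>2 \<le> size P\<close> by auto
  then obtain X2 where "X2 \<in># P'" by blast
  moreover have "X2 \<noteq> X"
  proof
    assume "X2 = X"
    then have "2 \<le> count P X" using P' \<open>X2 \<in># P'\<close> by (simp add: Suc_le_eq)
    then show False using P_count[of X] by simp
  qed
  ultimately show ?thesis using P' by auto
qed

lemma main_comb: "canP (C, Qs) = Fc n (bad (C, Qs))"
proof (cases "size P \<le> 1")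
  case True
  have "Dset n (bad (C, Qs)) = {}"
  proof (rule ccontr)
    assume "Dset n (bad (C, Qs)) \<noteq> {}"
    then obtain x where "x \<in> Dset n (bad (C, Qs))" by blast
    then obtain Q Q' y where h: "x \<notin> I" "Q \<in># Qs" "x \<in> Q" "Q' \<in># Qs" "y \<in> Q'" "y \<notin> I" "y \<notin> Q"
      unfolding D_char by blast
    have "Q - I \<in># P" unfolding P_mem using h by blast
    moreover have "Q' - I \<in># P" unfolding P_mem using h by blast
    moreover have "Q - I \<noteq> Q' - I" using h by blast
    ultimately have "2 \<le> size P" by (rule two_le_size)
    then show False using True by simp
  qed
  then show ?thesis using True by (simp add: canP_eq Fc_def)
next
  case False
  then have sP: "2 \<le> size P" by simp
  have "set_mset P = cls n (bad (C, Qs)) ` Dset n (bad (C, Qs))"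
  proof
    show "set_mset P \<subseteq> cls n (bad (C, Qs)) ` Dset n (bad (C, Qs))"
    proof
      fix X assume X: "X \<in># P"
      then obtain Q where Q: "X \<noteq> {}" "Q \<in># Qs" "X = Q - I" unfolding P_mem by blast
      then obtain x where x: "x \<in> X" by blast
      obtain X' where X': "X' \<in># P" "X' \<noteq> X" using two_P[OF sP X] by blast
      then obtain Q' where Q': "X' \<noteq> {}" "Q' \<in># Qs" "X' = Q' - I" unfolding P_mem by blast
      then obtain y where y: "y \<in> X'" by blast
      have "y \<notin> Q"
      proof
        assume "y \<in> Q"
        have "Q' = Q" using uniq[OF Q'(2) Q(2) _ \<open>y \<in> Q\<close>] y Q' by simp
        then show False using Q Q' X' by simp
      qed
      then have xD: "x \<in> Dset n (bad (C, Qs))" unfolding D_char using x y Q Q' by blast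
      have "cls n (bad (C, Qs)) x = X" using cls_eq[of Q x] xD x Q by simp
      then show "X \<in> cls n (bad (C, Qs)) ` Dset n (bad (C, Qs))" using xD by blast
    qed
  next
    show "cls n (bad (C, Qs)) ` Dset n (bad (C, Qs)) \<subseteq> set_mset P"
    proof
      fix X assume "X \<in> cls n (bad (C, Qs)) ` Dset n (bad (C, Qs))"
      then obtain x where xD: "x \<in> Dset n (bad (C, Qs))" and X: "X = cls n (bad (C, Qs)) x" by blast
      then obtain Q where Q: "x \<notin> I" "Q \<in># Qs" "x \<in> Q" unfolding D_char by blast
      have "X = Q - I" using cls_eq[OF Q(2,3) xD] X by simp
      then show "X \<in># P" unfolding P_mem using Q by blast
    qed
  qed
  then have "P = Fc n (bad (C, Qs))" unfolding Fc_def by (metis P_ident)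
  then show ?thesis using False by (simp add: canP_eq)
qed

end

lemma size_ge2:
  assumes "\<not> degenerate n K"
  shows "2 \<le> size (snd K)"
proof (rule ccontr)
  assume "\<not> 2 \<le> size (snd K)"
  then have "size (snd K) = 0 \<or> size (snd K) = 1" by linarith
  then have "\<forall>p. valid p K"
  proof
    assume "size (snd K) = 0"
    then show ?thesis by (auto simp: valid_def condH_def split: prod.splits)
  next
    assume "size (snd K) = 1"
    then obtain Q where "snd K = {#Q#}" using size_1_singleton_mset by blast
    then show ?thesis by (auto simp: valid_def condH_def split: prod.splits)
  qed
  then show False using assms by (simp add: degenerate_def)
qed

theorem mainTheorem5:
  fixes n :: nat and K K' :: cmi
  assumes "is_cmi n K" and "is_cmi n K'"
    and "pure K" and "pure K'"
    and "\<not> degenerate n K" and "\<not> degenerate n K'"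
    and "cmi_equiv n K K'"
  shows "canP K = canP K'"
proof -
  obtain C Qs where K: "K = (C, Qs)" by (cases K)
  obtain C' Qs' where K': "K' = (C', Qs')" by (cases K')
  have s1: "2 \<le> size Qs" using size_ge2[OF assms(5)] K by simp
  have s2: "2 \<le> size Qs'" using size_ge2[OF assms(6)] K' by simp
  have "bad K = bad K'"
  proof
    fix S
    have "valid (pS S) K \<longleftrightarrow> valid (pS S) K'"
      using assms(7) admissible_pS by (simp add: cmi_equiv_def)
    then show "bad K S = bad K' S" by (simp add: valid_pS)
  qed
  have "canP K = Fc n (bad K)"
    using main_comb[of C Qs n] assms(1,3) s1 K by simp
  moreover have "canP K' = Fc n (bad K')"
    using main_comb[of C' Qs' n] assms(2,4) s2 K' by simp
  ultimately show ?thesis using \<open>bad K = bad K'\<close> by simp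
qed

end
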